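(* Every tree (in which every nontrivial pseudo-supremum is a supremum) that is $\mathbb{R}$-special and collectionwise Hausdorff in the interval topology is perfect, i.e. every closed subset is a $G_\delta$.
   Context: A tree is a partially ordered set in which the set of predecessors of each element is well-ordered. For a nonempty chain bounded above, its pseudo-supremum is the set of its minimal upper bounds; standing assumption: each such set is a singleton. A tree $T$ is $\mathbb{R}$-special if there is a function $f\colon T\to\mathbb{R}$ with $p<q\Rightarrow f(p)<f(q)$. The interval topology has as base all sets $(s,t]=\{x:s<x\le t\}$ together with all singletons $\{t\}$ with $t$ minimal. Collectionwise Hausdorff: every closed discrete set $D$ expands to a pairwise disjoint family of open sets $\{U_d:d\in D\}$ with $d\in U_d$. *)

theory Defs
  imports "HOL-Analysis.Analysis"
begin

definition is_tree :: "'a::order itself \<Rightarrow> bool" where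
  "is_tree _ \<longleftrightarrow> (\<forall>t::'a. (\<forall>x y. x < t \<and> y < t \<longrightarrow> x \<le> y \<or> y \<le> x) \<and>
                     (\<forall>S. S \<noteq> {} \<and> S \<subseteq> {s. s < t} \<longrightarrow> (\<exists>m\<in>S. \<forall>s\<in>S. m \<le> s)))"

definition is_chain_ord :: "'a::order set \<Rightarrow> bool" where
  "is_chain_ord C \<longleftrightarrow> (\<forall>x\<in>C. \<forall>y\<in>C. x \<le> y \<or> y \<le> x)"

definition pseudo_sup :: "'a::order set \<Rightarrow> 'a set" where
  "pseudo_sup C = {u. (\<forall>c\<in>C. c \<le> u) \<and> \<not> (\<exists>v. (\<forall>c\<in>C. c \<le> v) \<and> v < u)}"

definition pseudo_sups_are_sups :: "'a::order itself \<Rightarrow> bool" where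
  "pseudo_sups_are_sups _ \<longleftrightarrow> (\<forall>C::'a set. C \<noteq> {} \<and> is_chain_ord C \<and> (\<exists>b. \<forall>c\<in>C. c \<le> b)
      \<longrightarrow> (\<exists>u. pseudo_sup C = {u}))"

definition R_special :: "'a::order itself \<Rightarrow> bool" where
  "R_special _ \<longleftrightarrow> (\<exists>f::'a \<Rightarrow> real. \<forall>p q. p < q \<longrightarrow> f p < f q)"

definition interval_topology :: "'a::order topology" where
  "interval_topology = topology_generated_by
     ({ {x. s < x \<and> x \<le> t} | s t. True } \<union> { {t} | t. \<forall>x. \<not> x < t })"

definition collectionwise_hausdorff :: "'a topology \<Rightarrow> bool" where
  "collectionwise_hausdorff X \<longleftrightarrow>
     (\<forall>D. closedin X D \<and> (\<forall>d\<in>D. \<exists>U. openin X U \<and> U \<inter> D = {d}) \<longrightarrow>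
        (\<exists>U. (\<forall>d\<in>D. openin X (U d) \<and> d \<in> U d) \<and>
             (\<forall>d\<in>D. \<forall>e\<in>D. d \<noteq> e \<longrightarrow> U d \<inter> U e = {})))"

definition perfect_space :: "'a topology \<Rightarrow> bool" where
  "perfect_space X \<longleftrightarrow> (\<forall>C. closedin X C \<longrightarrow> gdelta_in X C)"

end

theory Submission imports Defs begin

definition ioc :: "'a::order \<Rightarrow> 'a \<Rightarrow> 'a set" where
  "ioc s t = {x. s < x \<and> x \<le> t}"

lemma tree_cmp:
  assumes "is_tree TYPE('a::order)" "x < t" "y < (t::'a)"
  shows "x \<le> y \<or> y \<le> x"
  using assms unfolding is_tree_def by blast

lemma tree_least:
  assumes "is_tree TYPE('a::order)" "S \<noteq> {}" "S \<subseteq> {s. s < (t::'a)}"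
  shows "\<exists>m\<in>S. \<forall>s\<in>S. m \<le> s"
  using assms unfolding is_tree_def by blast

lemma topspace_it: "topspace (interval_topology :: 'a::order topology) = UNIV"
proof -
  have "x \<in> \<Union>({ {x. s < x \<and> x \<le> t} | s t. True } \<union> { {t} | t. \<forall>x. \<not> x < t })" for x :: 'a
  proof (cases "\<exists>s. s < x")
    case True
    then obtain s where "s < x" by blast
    then have "x \<in> {y. s < y \<and> y \<le> x}" by simp
    then show ?thesis by blast
  next
    case False
    then show ?thesis by blast
  qed
  then show ?thesis unfolding interval_topology_def topology_generated_by_topspace by blast
qed

lemma open_ioc: "openin interval_topology (ioc s t)"
  unfolding interval_topology_def ioc_def
  by (rule topology_generated_by_Basis) blast

lemma open_min: "(\<forall>x. \<not> x < t) \<Longrightarrow> openin interval_topology {t}"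
  unfolding interval_topology_def
  by (rule topology_generated_by_Basis) blast

lemma open_UNIV_it: "openin interval_topology UNIV"
  by (metis openin_topspace topspace_it)

lemma nbhd_ioc:
  assumes tr: "is_tree TYPE('a::order)" and U: "openin interval_topology U"
  shows "\<forall>y::'a. y \<in> U \<and> (\<exists>s. s < y) \<longrightarrow> (\<exists>s<y. ioc s y \<subseteq> U)"
proof -
  have "generate_topology_on ({ {x. s < x \<and> x \<le> t} | s t. True } \<union> { {t} | t. \<forall>x::'a. \<not> x < t }) U"
    using U unfolding interval_topology_def by (rule openin_topology_generated_by)
  then show ?thesis
  proof (induction rule: generate_topology_on.induct)
    case Empty
    then show ?case by simp
  next
    case (Int a b)
    show ?case
    proof (intro allI impI)
      fix y :: 'a assume y: "y \<in> a \<inter> b \<and> (\<exists>s. s < y)"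
      then obtain s1 where s1: "s1 < y" "ioc s1 y \<subseteq> a" using Int by blast
      obtain s2 where s2: "s2 < y" "ioc s2 y \<subseteq> b" using Int y by blast
      have "s1 \<le> s2 \<or> s2 \<le> s1" using tree_cmp[OF tr s1(1) s2(1)] .
      then show "\<exists>s<y. ioc s y \<subseteq> a \<inter> b"
      proof
        assume "s1 \<le> s2"
        then have "ioc s2 y \<subseteq> ioc s1 y" unfolding ioc_def using order_le_less_trans by blast
        then show ?thesis using s1 s2 by blast
      next
        assume "s2 \<le> s1"
        then have "ioc s1 y \<subseteq> ioc s2 y" unfolding ioc_def using order_le_less_trans by blast
        then show ?thesis using s1 s2 by blast
      qed
    qed
  next
    case (UN K)
    then show ?case by blast
  next
    case (Basis s)
    show ?case
    proof (intro allI impI)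
      fix y :: 'a assume y: "y \<in> s \<and> (\<exists>s. s < y)"
      from Basis consider (a) p t where "s = {x. p < x \<and> x \<le> t}" | (b) t where "s = {t}" "\<forall>x. \<not> x < t"
        by blast
      then show "\<exists>sa<y. ioc sa y \<subseteq> s"
      proof cases
        case a
        then have "p < y" "y \<le> t" using y by auto
        then show ?thesis unfolding a ioc_def using order_trans by blast
      next
        case b
        then show ?thesis using y by auto
      qed
    qed
  qed
qed

lemma small_inv:
  assumes "(e::real) > 0"
  shows "\<exists>k\<ge>k1. 1 / (real k + 1) < e"
proof -
  obtain n where n: "inverse (real (Suc n)) < e" using reals_Archimedean[OF assms] by blast
  have "1 / (real (max k1 n) + 1) \<le> inverse (real (Suc n))"
    by (simp add: field_simps)
  then show ?thesis using n by (intro exI[of _ "max k1 n"]) auto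
qed

theorem corollary4p32:
  assumes "is_tree TYPE('a::order)"
    and "pseudo_sups_are_sups TYPE('a)"
    and "R_special TYPE('a)"
    and "collectionwise_hausdorff (interval_topology :: 'a topology)"
  shows "perfect_space (interval_topology :: 'a topology)"
proof -
  note tr = assms(1)
  let ?X = "interval_topology :: 'a topology"
  obtain f :: "'a \<Rightarrow> real" where f: "\<And>p q. p < q \<Longrightarrow> f p < f q"
    using assms(3) unfolding R_special_def by blast
  have fle: "f p \<le> f q" if "p \<le> q" for p q
    using f[of p q] that by (cases "p = q") (auto simp: order.order_iff_strict)
  have cmp: "x \<le> y \<or> y \<le> x" if "x < t" "y < t" for x y t :: 'a
    using tree_cmp[OF tr that] .
  define lim where "lim a \<longleftrightarrow> (\<exists>s. s < a) \<and> (\<forall>p<a. \<exists>z. p < z \<and> z < a)" for a :: 'a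
  define \<sigma> where "\<sigma> a = Sup (f ` {z. z < a})" for a :: 'a
  have bdd: "bdd_above (f ` {z. z < a})" for a
    by (rule bdd_aboveI[of _ "f a"]) (auto intro: less_imp_le f)
  have sig_gt: "f z < \<sigma> a" if L: "lim a" "z < a" for z a
  proof -
    obtain z' where "z < z'" "z' < a" using L unfolding lim_def by blast
    then have "f z < f z'" "f z' \<le> \<sigma> a"
      using f bdd unfolding \<sigma>_def by (auto intro: cSup_upper)
    then show ?thesis by simp
  qed
  have sig_approx: "\<exists>z<a. f z > \<sigma> a - e" if "lim a" "e > 0" for a e
  proof -
    have ne: "f ` {z. z < a} \<noteq> {}" using that unfolding lim_def by blast
    have "\<sigma> a - e < \<sigma> a" using that by simp
    then show ?thesis using less_cSupD[OF ne] unfolding \<sigma>_def by auto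
  qed
  have open_single: "openin ?X {c}" if L: "\<not> lim c" for c
  proof (cases "\<exists>s. s < c")
    case False
    then show ?thesis using open_min by blast
  next
    case True
    then obtain p where p: "p < c" "\<not> (\<exists>z. p < z \<and> z < c)" using L unfolding lim_def by blast
    then have "ioc p c = {c}" unfolding ioc_def by (auto simp: order.order_iff_strict)
    then show ?thesis using open_ioc by metis
  qed
  show ?thesis
    unfolding perfect_space_def
  proof (intro allI impI)
    fix C :: "'a set"
    assume Ccl: "closedin ?X C"
    have openNC: "openin ?X (- C)"
      using Ccl unfolding closedin_def topspace_it by (simp add: Compl_eq_Diff_UNIV)
    define G where "G a = {z. z < a \<and> (\<forall>c\<in>C. c < a \<longrightarrow> c < z)}" for a
    define m where "m a = (SOME z. z \<in> G a \<and> (\<forall>y\<in>G a. z \<le> y))" for a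
    have m: "m a \<in> G a \<and> (\<forall>y\<in>G a. m a \<le> y)" if "G a \<noteq> {}" for a
    proof -
      have "\<exists>z\<in>G a. \<forall>y\<in>G a. z \<le> y" using tree_least[OF tr that, of a] unfolding G_def by blast
      then have "\<exists>z. z \<in> G a \<and> (\<forall>y\<in>G a. z \<le> y)" by blast
      then show ?thesis unfolding m_def by (rule someI_ex)
    qed
    define E where "E n = {a\<in>C. lim a \<and> G a \<noteq> {} \<and> f a - f (m a) > 1 / (real n + 1)}" for n
    have mC: "\<not> (m a < c \<and> c < a)" if "G a \<noteq> {}" "c \<in> C" for a c
      using m[OF that(1)] that(2) unfolding G_def by (auto dest: less_trans)
    have Edisc: "\<exists>U. openin ?X U \<and> U \<inter> E n = {d}" if "d \<in> E n" for n d
    proof (intro exI conjI)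
      show "openin ?X (ioc (m d) d)" by (rule open_ioc)
      have Gd: "G d \<noteq> {}" using that unfolding E_def by blast
      have "m d < d" using m[OF Gd] unfolding G_def by blast
      moreover have "z = d" if "z \<in> ioc (m d) d" "z \<in> E n" for z
        using that mC[OF Gd, of z] unfolding ioc_def E_def by (auto simp: order.order_iff_strict)
      ultimately show "ioc (m d) d \<inter> E n = {d}" using that unfolding ioc_def by auto
    qed
    have Eclosed: "closedin ?X (E n)" for n
    proof -
      have "openin ?X (- E n)"
      proof (subst openin_subopen, intro ballI)
        fix y assume y: "y \<in> - E n"
        show "\<exists>T. openin ?X T \<and> y \<in> T \<and> T \<subseteq> - E n"
        proof (cases "\<exists>s. s < y")
          case False
          then show ?thesis using open_min[of y] y by blast
        next
          case True
          then obtain s0 where s0: "s0 < y" by blast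
          show ?thesis
          proof (cases "\<exists>s<y. ioc s y \<inter> E n = {}")
            case True
            then obtain s where "s < y" "ioc s y \<inter> E n = {}" by blast
            then show ?thesis using open_ioc[of s y] unfolding ioc_def by blast
          next
            case False
            then have ex: "\<exists>e\<in>E n. s < e \<and> e < y" if "s < y" for s
              using that y unfolding ioc_def by (auto simp: order.order_iff_strict)
            define S where "S = {e \<in> E n. s0 < e \<and> e < y}"
            have Sne: "f ` S \<noteq> {}" using ex[OF s0] unfolding S_def by blast
            have Sbdd: "bdd_above (f ` S)"
              by (rule bdd_aboveI[of _ "f y"]) (auto simp: S_def intro: less_imp_le f)
            have "Sup (f ` S) - 1 / (real n + 1) < Sup (f ` S)" by simp
            then obtain e where e: "e \<in> S" "f e > Sup (f ` S) - 1 / (real n + 1)"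
              using less_cSupD[OF Sne] by blast
            then obtain e' where e': "e' \<in> E n" "e < e'" "e' < y" using ex[of e] unfolding S_def by blast
            have e'S: "e' \<in> S" using e e' unfolding S_def by (auto dest: less_trans)
            have Ge': "G e' \<noteq> {}" and gap: "f e' - f (m e') > 1 / (real n + 1)"
              using e'(1) unfolding E_def by auto
            have "e \<in> C" using e unfolding S_def E_def by blast
            then have "e < m e'" using m[OF Ge'] e'(2) unfolding G_def by blast
            then have "f e < f (m e')" by (rule f)
            then have "f e' > Sup (f ` S)" using gap e by linarith
            moreover have "f e' \<le> Sup (f ` S)" using e'S Sbdd by (auto intro: cSup_upper)
            ultimately show ?thesis by linarith
          qed
        qed
      qed
      then show ?thesis unfolding closedin_def topspace_it by (simp add: Compl_eq_Diff_UNIV)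
    qed
    have "\<forall>n. \<exists>U. (\<forall>d\<in>E n. openin ?X (U d) \<and> d \<in> U d) \<and>
             (\<forall>d\<in>E n. \<forall>e\<in>E n. d \<noteq> e \<longrightarrow> U d \<inter> U e = {})"
    proof
      fix n
      have "closedin ?X (E n) \<and> (\<forall>d\<in>E n. \<exists>U. openin ?X U \<and> U \<inter> E n = {d})"
        using Eclosed Edisc by blast
      with assms(4)[unfolded collectionwise_hausdorff_def, THEN spec, of "E n"]
      show "\<exists>U. (\<forall>d\<in>E n. openin ?X (U d) \<and> d \<in> U d) \<and>
             (\<forall>d\<in>E n. \<forall>e\<in>E n. d \<noteq> e \<longrightarrow> U d \<inter> U e = {})"
        by (rule mp)
    qed
    then obtain UU where UU: "\<And>n. (\<forall>d\<in>E n. openin ?X (UU n d) \<and> d \<in> UU n d) \<and>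
             (\<forall>d\<in>E n. \<forall>e\<in>E n. d \<noteq> e \<longrightarrow> UU n d \<inter> UU n e = {})"
      by metis
    define w where "w k c = (SOME v. v \<in> C \<and> v < c \<and> f v > \<sigma> c - 1 / (real k + 1))" for k c
    define s where "s k c = (SOME v. v < c \<and> f v > \<sigma> c - 1 / (real k + 1))" for k c
    have w: "w k c \<in> C \<and> w k c < c \<and> f (w k c) > \<sigma> c - 1 / (real k + 1)"
      if L: "lim c" "G c = {}" for k c
    proof -
      obtain z where z: "z < c" "f z > \<sigma> c - 1 / (real k + 1)"
        using sig_approx[OF L(1), of "1 / (real k + 1)"] by auto
      have "z \<notin> G c" using that(2) by blast
      then obtain v where v: "v \<in> C" "v < c" "\<not> v < z" using z unfolding G_def by blast
      then have "z \<le> v" using cmp[OF z(1) v(2)] by (auto simp: order.order_iff_strict)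
      then have "f v > \<sigma> c - 1 / (real k + 1)" using fle[of z v] z by linarith
      then have "\<exists>v. v \<in> C \<and> v < c \<and> f v > \<sigma> c - 1 / (real k + 1)" using v by blast
      then show ?thesis unfolding w_def by (rule someI_ex)
    qed
    have s: "s k c < c \<and> f (s k c) > \<sigma> c - 1 / (real k + 1)" if "lim c" for k c
    proof -
      have "\<exists>v. v < c \<and> f v > \<sigma> c - 1 / (real k + 1)"
        using sig_approx[OF that(1), of "1 / (real k + 1)"] by auto
      then show ?thesis unfolding s_def by (rule someI_ex)
    qed
    define P where "P j c = (if c \<in> E j then UU j c else UNIV)" for j c
    define V where "V k c = (if \<not> lim c then {c} else if G c = {} then ioc (w k c) c
        else ioc (m c) c \<inter> ioc (s k c) c \<inter> (\<Inter>j\<in>{..k}. P j c))" for k c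
    define Ok where "Ok k = (\<Union>c\<in>C. V k c)" for k
    have Vopen: "openin ?X (V k c)" for k c
    proof -
      have "openin ?X (\<Inter>j\<in>{..k}. P j c)"
        by (rule openin_INT2) (auto simp: P_def UU open_UNIV_it)
      then show ?thesis unfolding V_def by (auto intro!: openin_Int open_ioc open_single)
    qed
    have Oopen: "openin ?X (Ok k)" for k
      unfolding Ok_def using Vopen by blast
    have CsubV: "c \<in> V k c" if "c \<in> C" for k c
    proof -
      consider "\<not> lim c" | "lim c" "G c = {}" | "lim c" "G c \<noteq> {}" by blast
      then show ?thesis
      proof cases
        case 1 then show ?thesis unfolding V_def by simp
      next
        case 2 then show ?thesis using w[OF 2] unfolding V_def ioc_def by simp
      next
        case 3
        have "m c < c" using m[OF 3(2)] unfolding G_def by blast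
        moreover have "s k c < c" using s[OF 3(1)] by blast
        moreover have "c \<in> P j c" for j using UU[of j] unfolding P_def by auto
        ultimately show ?thesis using 3 unfolding V_def ioc_def by auto
      qed
    qed
    have InterO: "\<Inter> (range Ok) = C"
    proof
      show "C \<subseteq> \<Inter> (range Ok)" unfolding Ok_def using CsubV by blast
    next
      show "\<Inter> (range Ok) \<subseteq> C"
      proof
        fix x assume xO: "x \<in> \<Inter> (range Ok)"
        show "x \<in> C"
        proof (rule ccontr)
          assume xC: "x \<notin> C"
          have "\<forall>k. \<exists>c. c \<in> C \<and> x \<in> V k c" using xO unfolding Ok_def by blast
          then obtain cc where cc: "\<And>k. cc k \<in> C" "\<And>k. x \<in> V k (cc k)" by metis
          have limc: "lim (cc k)" for k
            using cc[of k] xC unfolding V_def by (auto split: if_splits)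
          show False
          proof (cases "\<forall>k0. \<exists>k\<ge>k0. G (cc k) = {}")
            case True
            have "\<exists>k. G (cc k) = {}" using True by blast
            then obtain k where "G (cc k) = {}" by blast
            then have "w k (cc k) < x" using cc(2)[of k] limc[of k] unfolding V_def ioc_def by auto
            then have "x \<in> - C \<and> (\<exists>s. s < x)" using xC by blast
            then obtain r where r: "r < x" "ioc r x \<subseteq> - C"
              using nbhd_ioc[OF tr openNC] by blast
            have "f r < f x" using f r(1) .
            then obtain k0 where k0: "1 / (real k0 + 1) < f x - f r"
              using small_inv[of "f x - f r" 0] by auto
            obtain k where k: "k \<ge> k0" "G (cc k) = {}" using True by blast
            let ?c = "cc k"
            have wk: "w k ?c \<in> C" "w k ?c < ?c" "f (w k ?c) > \<sigma> ?c - 1 / (real k + 1)"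
              using w[OF limc k(2)] by auto
            have xin: "x \<in> ioc (w k ?c) ?c" using cc(2)[of k] limc[of k] k(2) unfolding V_def by auto
            then have wx: "w k ?c < x" and xc: "x \<le> ?c" unfolding ioc_def by auto
            have "x \<noteq> ?c" using xC cc(1) by metis
            with xc have xc': "x < ?c" by simp
            have "\<not> r < w k ?c" using r(2) wk(1) wx unfolding ioc_def by auto
            then have "w k ?c \<le> r" using cmp[OF wx r(1)] by (auto simp: order.order_iff_strict)
            then have "f (w k ?c) \<le> f r" by (rule fle)
            moreover have "f x < \<sigma> ?c" using sig_gt[OF limc xc'] .
            moreover have "1 / (real k + 1) \<le> 1 / (real k0 + 1)"
              using k(1) by (simp add: frac_le)
            ultimately show False using k0 wk(3) by linarith
          next
            case False
            then obtain k0 where k0: "\<And>k. k \<ge> k0 \<Longrightarrow> G (cc k) \<noteq> {}" by blast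
            have xV: "x \<in> ioc (m (cc k)) (cc k) \<and> x \<in> ioc (s k (cc k)) (cc k) \<and> (\<forall>j\<le>k. x \<in> P j (cc k))"
              if "k \<ge> k0" for k
              using cc(2)[of k] limc[of k] k0[OF that] unfolding V_def by auto
            have xlt: "x < cc k" for k
            proof -
              have "x \<noteq> cc k" using xC cc(1) by metis
              moreover have "x \<in> V k (cc k)" by (rule cc(2))
              ultimately show ?thesis using limc[of k] unfolding V_def ioc_def
                by (auto split: if_splits)
            qed
            have mle: "m a \<le> m b" if ab: "a \<in> C" "b \<in> C" "G a \<noteq> {}" "G b \<noteq> {}"
              "m a < x" "x < a" "m b < x" "x < b" for a b
            proof -
              have "m b \<in> G a" unfolding G_def
              proof (intro CollectI conjI ballI impI)
                show "m b < a" using ab less_trans by blast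
                fix c assume c: "c \<in> C" "c < a"
                have "c \<noteq> x" using c xC by blast
                moreover have "\<not> x < c"
                proof
                  assume "x < c"
                  then have "m a < c" using ab less_trans by blast
                  then show False using mC[OF ab(3) c(1)] c(2) by blast
                qed
                ultimately have "c < x" using cmp[OF c(2) ab(6)] by (auto simp: order.order_iff_strict)
                then have "c < b" using ab less_trans by blast
                then show "c < m b" using m[OF ab(4)] c(1) unfolding G_def by blast
              qed
              then show ?thesis using m[OF ab(3)] by blast
            qed
            define mm where "mm = m (cc k0)"
            have mmeq: "m (cc k) = mm" if "k \<ge> k0" for k
            proof -
              have a: "m (cc k) < x" using xV[OF that] unfolding ioc_def by auto
              have b: "m (cc k0) < x" using xV[of k0] unfolding ioc_def by auto
              show ?thesis unfolding mm_def
                using mle[OF cc(1) cc(1) k0[OF that] k0[OF order_refl] a xlt b xlt]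
                  mle[OF cc(1) cc(1) k0[OF order_refl] k0[OF that] b xlt a xlt] by simp
            qed
            have "mm < x" using xV[of k0] mmeq[of k0] unfolding ioc_def by auto
            then have "f mm < f x" by (rule f)
            then obtain M where M: "1 / (real M + 1) < f x - f mm"
              using small_inv[of "f x - f mm" 0] by auto
            have ccE: "cc k \<in> E M" if "k \<ge> k0" for k
            proof -
              have "f x < f (cc k)" using f xlt by blast
              then have "f (cc k) - f (m (cc k)) > 1 / (real M + 1)" using M unfolding mmeq[OF that] by linarith
              then show ?thesis unfolding E_def using cc(1)[of k] limc[of k] k0[OF that] by blast
            qed
            define k1 where "k1 = max k0 M"
            have inU: "x \<in> UU M (cc k)" if "k \<ge> k1" for k
            proof -
              have "x \<in> P M (cc k)" using xV[of k] that unfolding k1_def by auto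
              then show ?thesis using ccE[of k] that unfolding P_def k1_def by auto
            qed
            have cceq: "cc k = cc k1" if kk: "k \<ge> k1" for k
            proof (rule ccontr)
              assume ne: "cc k \<noteq> cc k1"
              have "k \<ge> k0" "k1 \<ge> k0" using kk unfolding k1_def by auto
              then have "cc k \<in> E M" "cc k1 \<in> E M" using ccE by auto
              then have "UU M (cc k) \<inter> UU M (cc k1) = {}" using UU[of M] ne by blast
              moreover have "x \<in> UU M (cc k)" "x \<in> UU M (cc k1)" using inU kk by auto
              ultimately show False by blast
            qed
            let ?a = "cc k1"
            have "f x < \<sigma> ?a" using sig_gt[OF limc xlt] .
            then obtain k where k: "k \<ge> k1" "1 / (real k + 1) < \<sigma> ?a - f x"
              using small_inv[of "\<sigma> ?a - f x" k1] by auto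
            have "s k ?a < x" using xV[of k] k(1) cceq[OF k(1)] unfolding k1_def ioc_def by auto
            then have "f (s k ?a) < f x" by (rule f)
            moreover have "f (s k ?a) > \<sigma> ?a - 1 / (real k + 1)" using s[OF limc] by blast
            ultimately show False using k(2) by linarith
          qed
        qed
      qed
    qed
    have "gdelta_in ?X (\<Inter> (range Ok))"
      by (rule gdelta_in_Inter) (auto intro: open_imp_gdelta_in Oopen)
    then show "gdelta_in ?X C" using InterO by simp
  qed
qed

end
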